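(* There exists a symmetric noncommutative polynomial $f\in\mathbb{R}\langle x_1,x_2,x_3\rangle$ such that $f\in\mathbb{R}\langle x_1,x_2\rangle+\mathbb{R}\langle x_2,x_3\rangle$ and $f$ is a sum of hermitian squares in $\mathbb{R}\langle x_1,x_2,x_3\rangle$, but $f\notin\Sigma\langle x_1,x_2\rangle+\Sigma\langle x_2,x_3\rangle$.
   Context: $\mathbb{R}\langle x_1,\dots,x_n\rangle$ is the free real algebra of polynomials in noncommuting letters $x_1,\dots,x_n$, equipped with the involution $\star$ fixing $\mathbb{R}\cup\{x_1,\dots,x_n\}$ pointwise and reversing words; $f$ is symmetric if $f^\star=f$. A sum of hermitian squares (SOHS) is a polynomial of the form $\sum_i h_i^\star h_i$. For a subset of letters, $\mathbb{R}\langle x_i,x_j\rangle$ denotes the subalgebra of polynomials in those letters only, and $\Sigma\langle x_i,x_j\rangle$ the set of sums of hermitian squares $\sum_k h_k^\star h_k$ with all $h_k\in\mathbb{R}\langle x_i,x_j\rangle$. *)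

theory Defs
  imports Complex_Main
begin

text \<open>Noncommutative real polynomials: letters are natural numbers, words are lists of
letters, a polynomial is its coefficient function on words (with finite support).\<close>

type_synonym ncpoly = "nat list \<Rightarrow> real"

definition nc_poly :: "nat set \<Rightarrow> ncpoly \<Rightarrow> bool" where
  "nc_poly X f \<longleftrightarrow> finite {w. f w \<noteq> 0} \<and> (\<forall>w. f w \<noteq> 0 \<longrightarrow> set w \<subseteq> X)"

definition nc_mult :: "ncpoly \<Rightarrow> ncpoly \<Rightarrow> ncpoly" where
  "nc_mult f g = (\<lambda>w. \<Sum>i\<le>length w. f (take i w) * g (drop i w))"

definition nc_star :: "ncpoly \<Rightarrow> ncpoly" where
  "nc_star f = (\<lambda>w. f (rev w))"

definition SOHS :: "nat set \<Rightarrow> ncpoly \<Rightarrow> bool" where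
  "SOHS X f \<longleftrightarrow> (\<exists>(n::nat) (hs :: nat \<Rightarrow> ncpoly). (\<forall>i<n. nc_poly X (hs i)) \<and>
      f = (\<lambda>w. \<Sum>i<n. nc_mult (nc_star (hs i)) (hs i) w))"

end

theory Submission
  imports Defs
begin


abbreviation sq :: "ncpoly \<Rightarrow> ncpoly" where "sq h \<equiv> nc_mult (nc_star h) h"

lemma sq_eq: "sq h w = (\<Sum>i\<le>length w. h (rev (take i w)) * h (drop i w))"
  by (simp add: nc_mult_def nc_star_def)

lemma split_iff:
  assumes "i \<le> length w"
  shows "(a = rev (take i w) \<and> b = drop i w) \<longleftrightarrow> (i = length a \<and> w = rev a @ b)"
proof
  assume "a = rev (take i w) \<and> b = drop i w"
  then show "i = length a \<and> w = rev a @ b" using assms by auto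
next
  assume "i = length a \<and> w = rev a @ b"
  then show "a = rev (take i w) \<and> b = drop i w" by auto
qed

lemma sq_pairs:
  assumes H: "finite H" and supp: "\<And>a. h a \<noteq> 0 \<Longrightarrow> a \<in> H"
  shows "sq h w = (\<Sum>a\<in>H. \<Sum>b\<in>H. if w = rev a @ b then h a * h b else 0)"
proof -
  have d: "h x = (\<Sum>a\<in>H. if a = x then h a else 0)" for x
    using H supp by (cases "x \<in> H") auto
  have "sq h w = (\<Sum>i\<le>length w. (\<Sum>a\<in>H. if a = rev (take i w) then h a else 0)
                   * (\<Sum>b\<in>H. if b = drop i w then h b else 0))"
    unfolding sq_eq by (subst d, subst d, rule refl)
  also have "\<dots> = (\<Sum>i\<le>length w. \<Sum>a\<in>H. \<Sum>b\<in>H.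
       if a = rev (take i w) \<and> b = drop i w then h a * h b else 0)"
    unfolding sum_product by (intro sum.cong refl) auto
  also have "\<dots> = (\<Sum>i\<le>length w. \<Sum>a\<in>H. \<Sum>b\<in>H.
       if i = length a \<and> w = rev a @ b then h a * h b else 0)"
    by (intro sum.cong refl) (simp add: split_iff)
  also have "\<dots> = (\<Sum>a\<in>H. \<Sum>b\<in>H. \<Sum>i\<le>length w.
       if i = length a \<and> w = rev a @ b then h a * h b else 0)"
    by (subst sum.swap, rule sum.cong, rule refl, subst sum.swap, rule refl)
  also have "\<dots> = (\<Sum>a\<in>H. \<Sum>b\<in>H. if w = rev a @ b then h a * h b else 0)"
    by (intro sum.cong refl) (auto simp: if_distrib[symmetric] cong: if_cong)
  finally show ?thesis .
qed


lemma ifmul: "(if P then x else 0) * (y::real) = (if P then x * y else 0)" by simp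

lemma rev_eq_swap: "(rev w = rev a @ b) \<longleftrightarrow> (w = rev b @ a)"
  by (metis rev_append rev_rev_ident)

lemma Lam_sq:
  assumes W: "finite W" and H: "finite H" and supp: "\<And>a. h a \<noteq> 0 \<Longrightarrow> a \<in> H"
    and HW: "\<And>a b. a \<in> H \<Longrightarrow> b \<in> H \<Longrightarrow> rev a @ b \<in> W"
  shows "(\<Sum>w\<in>W. sq h w * c w) = (\<Sum>a\<in>H. \<Sum>b\<in>H. h a * h b * c (rev a @ b))"
proof -
  have "(\<Sum>w\<in>W. sq h w * c w) = (\<Sum>w\<in>W. \<Sum>a\<in>H. \<Sum>b\<in>H. if w = rev a @ b then h a * h b * c w else 0)"
    by (intro sum.cong refl) (simp add: sq_pairs[OF H supp] sum_distrib_right ifmul)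
  also have "\<dots> = (\<Sum>a\<in>H. \<Sum>b\<in>H. \<Sum>w\<in>W. if w = rev a @ b then h a * h b * c w else 0)"
    by (subst sum.swap, rule sum.cong, rule refl, subst sum.swap, rule refl)
  also have "\<dots> = (\<Sum>a\<in>H. \<Sum>b\<in>H. h a * h b * c (rev a @ b))"
    using W HW by (intro sum.cong refl) simp
  finally show ?thesis .
qed

lemma sq_support:
  assumes "\<And>a. h a \<noteq> 0 \<Longrightarrow> length a \<le> d \<and> set a \<subseteq> X" and "sq h w \<noteq> 0"
  shows "length w \<le> 2 * d \<and> set w \<subseteq> X"
proof -
  obtain i where i: "i \<le> length w" "h (rev (take i w)) * h (drop i w) \<noteq> 0"
    using assms(2) unfolding sq_eq by (meson sum.not_neutral_contains_not_neutral atMost_iff)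
  then have nz: "h (rev (take i w)) \<noteq> 0" "h (drop i w) \<noteq> 0" by auto
  have a: "length (rev (take i w)) \<le> d \<and> set (rev (take i w)) \<subseteq> X" by (rule assms(1)[OF nz(1)])
  have b: "length (drop i w) \<le> d \<and> set (drop i w) \<subseteq> X" by (rule assms(1)[OF nz(2)])
  have "w = take i w @ drop i w" by simp
  then have "length w = length (rev (take i w)) + length (drop i w)"
    "set w = set (rev (take i w)) \<union> set (drop i w)"
    by (metis length_append length_rev, metis set_append set_rev)
  then show ?thesis using a b by (simp only:) auto
qed

lemma sq_top:
  assumes "\<And>a. h a \<noteq> 0 \<Longrightarrow> length a \<le> length u"
  shows "sq h (rev u @ u) = h u * h u"
proof -
  let ?w = "rev u @ u"
  have "sq h ?w = (\<Sum>i\<in>{..length ?w}. h (rev (take i ?w)) * h (drop i ?w))" by (rule sq_eq)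
  also have "\<dots> = h (rev (take (length u) ?w)) * h (drop (length u) ?w)"
  proof (rule sum.mono_neutral_right[where S="{length u}", THEN trans])
    show "finite {..length ?w}" by simp
    show "{length u} \<subseteq> {..length ?w}" by simp
    show "\<forall>i\<in>{..length ?w} - {length u}. h (rev (take i ?w)) * h (drop i ?w) = 0"
    proof
      fix i assume "i \<in> {..length ?w} - {length u}"
      then have "i < length u \<or> (i > length u \<and> i \<le> length ?w)" by auto
      then show "h (rev (take i ?w)) * h (drop i ?w) = 0"
      proof
        assume "i < length u"
        then have "length (drop i ?w) > length u" by simp
        then show ?thesis using assms by (metis mult_zero_right not_le)
      next
        assume "i > length u \<and> i \<le> length ?w"
        then have "length (rev (take i ?w)) > length u" by auto
        then show ?thesis using assms by (metis mult_zero_left not_le)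
      qed
    qed
  qed simp
  also have "\<dots> = h u * h u" by simp
  finally show ?thesis .
qed

lemma sq_sym:
  assumes H: "finite H" and supp: "\<And>a. h a \<noteq> 0 \<Longrightarrow> a \<in> H"
  shows "sq h (rev w) = sq h w"
proof -
  have "sq h (rev w) = (\<Sum>a\<in>H. \<Sum>b\<in>H. if rev w = rev a @ b then h a * h b else 0)"
    by (rule sq_pairs[OF H supp])
  also have "\<dots> = (\<Sum>b\<in>H. \<Sum>a\<in>H. if w = rev b @ a then h b * h a else 0)"
    by (subst sum.swap) (intro sum.cong refl, simp add: rev_eq_swap mult.commute)
  also have "\<dots> = sq h w" by (rule sq_pairs[OF H supp, symmetric])
  finally show ?thesis .
qed

lemma quad_nonneg:
  fixes h :: "nat list \<Rightarrow> real" and p :: "nat list \<Rightarrow> nat \<Rightarrow> real"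
  shows "(\<Sum>a\<in>H. \<Sum>b\<in>H. h a * h b * (p a 0 * p b 0 + p a 1 * p b 1 + p a 2 * p b 2)) \<ge> 0"
proof -
  have "(\<Sum>a\<in>H. \<Sum>b\<in>H. h a * h b * (p a 0 * p b 0 + p a 1 * p b 1 + p a 2 * p b 2)) =
     (\<Sum>a\<in>H. h a * p a 0)^2 + (\<Sum>a\<in>H. h a * p a 1)^2 + (\<Sum>a\<in>H. h a * p a 2)^2"
    by (simp add: power2_eq_square sum_product sum.distrib[symmetric] algebra_simps)
  then show ?thesis by simp
qed



definition e0 :: "nat \<Rightarrow> real" where "e0 i = (if i = 0 then 1 else 0)"

definition mat :: "real \<Rightarrow> nat \<Rightarrow> nat \<Rightarrow> nat \<Rightarrow> real" where
  "mat c a i j = (if a = 1 then (if (i = 0 \<and> j = 2) \<or> (i = 2 \<and> j = 0) then 1 else 0)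
     else if a = 3 then (if (i = 0 \<and> j = 2) \<or> (i = 2 \<and> j = 0) then -1 else 0)
     else if a = 2 then (if (i = 0 \<and> j = 1) \<or> (i = 1 \<and> j = 0) \<or> (i = 1 \<and> j = 2) \<or> (i = 2 \<and> j = 1) then 1
        else if i = 2 \<and> j = 2 then c else 0) else 0)"

definition app :: "real \<Rightarrow> nat \<Rightarrow> (nat \<Rightarrow> real) \<Rightarrow> nat \<Rightarrow> real" where
  "app c a x = (\<lambda>i. mat c a i 0 * x 0 + mat c a i 1 * x 1 + mat c a i 2 * x 2)"

definition ip :: "(nat \<Rightarrow> real) \<Rightarrow> (nat \<Rightarrow> real) \<Rightarrow> real" where
  "ip x y = x 0 * y 0 + x 1 * y 1 + x 2 * y 2"

definition psi :: "real \<Rightarrow> nat list \<Rightarrow> nat \<Rightarrow> real" where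
  "psi c w = foldr (app c) w e0"

definition lam :: "nat list \<Rightarrow> real" where
  "lam w = (if set w \<subseteq> {1,2} then ip e0 (psi 1 w) else if set w \<subseteq> {2,3} then ip e0 (psi 0 w) else 0)"

lemma ip_app: "ip (app c a x) y = ip x (app c a y)"
  by (cases "a = 1"; cases "a = 2"; cases "a = 3") (simp_all add: ip_def app_def mat_def algebra_simps)

lemma psi_Nil [simp]: "psi c [] = e0" by (simp add: psi_def)
lemma psi_Cons [simp]: "psi c (a # w) = app c a (psi c w)" by (simp add: psi_def)

lemma hankel: "ip (psi c u) (psi c t) = ip e0 (psi c (rev u @ t))"
proof (induction u arbitrary: t)
  case Nil then show ?case by simp
next
  case (Cons a u)
  have "ip (psi c (a # u)) (psi c t) = ip (psi c u) (psi c (a # t))" by (simp add: ip_app)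
  also have "\<dots> = ip e0 (psi c (rev u @ a # t))" by (rule Cons.IH)
  finally show ?case by simp
qed

lemma agree:
  assumes "set w \<subseteq> {2}" "length w \<le> 4"
  shows "ip e0 (psi 1 w) = ip e0 (psi 0 w)"
proof -
  define k where "k = length w"
  have w: "w = replicate k 2" unfolding k_def using assms(1) by (intro replicate_eqI) auto
  have "k = 0 \<or> k = 1 \<or> k = 2 \<or> k = 3 \<or> k = 4" using assms(2) unfolding k_def by arith
  then show ?thesis unfolding w
    by (elim disjE) (simp_all add: numeral_eq_Suc ip_def app_def mat_def e0_def)
qed

lemma lam12:
  assumes "set a \<subseteq> {1,2}" "set b \<subseteq> {1,2}"
  shows "lam (rev a @ b) = ip (psi 1 a) (psi 1 b)"
  using assms by (simp add: lam_def hankel)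

lemma lam23:
  assumes "set a \<subseteq> {2,3}" "set b \<subseteq> {2,3}" "length a \<le> 2" "length b \<le> 2"
  shows "lam (rev a @ b) = ip (psi 0 a) (psi 0 b)"
proof (cases "set (rev a @ b) \<subseteq> {1,2}")
  case True
  then have "set (rev a @ b) \<subseteq> {2}" using assms by auto
  then have "ip e0 (psi 1 (rev a @ b)) = ip e0 (psi 0 (rev a @ b))"
    using assms by (intro agree) auto
  then show ?thesis using True by (simp add: lam_def hankel)
next
  case False
  have h23: "set (rev a @ b) \<subseteq> {2,3}" using assms by auto
  show ?thesis by (simp only: lam_def False h23 if_False if_True hankel)
qed



definition h1 :: ncpoly where
  "h1 w = (if w = [1] then 1 else if w = [2,3] then 1 else if w = [] then 1 else if w = [2] then 1
     else if w = [2,2] then -1 else 0)"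
definition h2 :: ncpoly where
  "h2 w = (if w = [2,1] then 1 else if w = [3] then -1 else if w = [] then 2 else if w = [2] then -1
     else if w = [2,2] then -2 else 0)"

definition H1 :: "nat list set" where "H1 = {[1],[2,3],[],[2],[2,2]}"
definition H2 :: "nat list set" where "H2 = {[2,1],[3],[],[2],[2,2]}"

lemma H1_fin: "finite H1" and H2_fin: "finite H2" by (simp_all add: H1_def H2_def)
lemma h1_supp: "h1 a \<noteq> 0 \<Longrightarrow> a \<in> H1" by (simp add: h1_def H1_def split: if_splits)
lemma h2_supp: "h2 a \<noteq> 0 \<Longrightarrow> a \<in> H2" by (simp add: h2_def H2_def split: if_splits)

definition WW :: "nat list set" where "WW = {w. set w \<subseteq> {1,2,3} \<and> length w \<le> 4}"
lemma WW_fin: "finite WW" unfolding WW_def by (rule finite_lists_length_le) simp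

lemma val1: "(\<Sum>a\<in>H1. \<Sum>b\<in>H1. h1 a * h1 b * lam (rev a @ b)) = 0"
  by (simp add: H1_def h1_def lam_def ip_def app_def mat_def e0_def)

lemma val2: "(\<Sum>a\<in>H2. \<Sum>b\<in>H2. h2 a * h2 b * lam (rev a @ b)) = -2"
  by (simp add: H2_def h2_def lam_def ip_def app_def mat_def e0_def)

lemma sq1: "sq h1 w = (\<Sum>a\<in>H1. \<Sum>b\<in>H1. if w = rev a @ b then h1 a * h1 b else 0)"
  by (rule sq_pairs[OF H1_fin]) (rule h1_supp)
lemma sq2: "sq h2 w = (\<Sum>a\<in>H2. \<Sum>b\<in>H2. if w = rev a @ b then h2 a * h2 b else 0)"
  by (rule sq_pairs[OF H2_fin]) (rule h2_supp)

lemma restrict_mixed: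
  assumes "1 \<in> set w" "3 \<in> set w"
  shows "(\<Sum>a\<in>H. \<Sum>b\<in>H. if w = rev a @ b then (X a b::real) else 0)
    = (\<Sum>a\<in>H. \<Sum>b\<in>H. if w = rev a @ b \<and> 1 \<in> set (rev a @ b) \<and> 3 \<in> set (rev a @ b) then X a b else 0)"
  using assms by (intro sum.cong refl) auto

lemma mixed:
  assumes "1 \<in> set w" "3 \<in> set w"
  shows "sq h1 w + sq h2 w = 0"
  unfolding sq1 sq2 restrict_mixed[OF assms]
  by (simp add: H1_def H2_def h1_def h2_def)


lemma h1_small: "h1 a \<noteq> 0 \<Longrightarrow> length a \<le> 2 \<and> set a \<subseteq> {1,2,3}"
  by (simp add: h1_def split: if_splits)
lemma h2_small: "h2 a \<noteq> 0 \<Longrightarrow> length a \<le> 2 \<and> set a \<subseteq> {1,2,3}"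
  by (simp add: h2_def split: if_splits)

definition ff :: ncpoly where "ff = (\<lambda>w. sq h1 w + sq h2 w)"

lemma ff_small: "ff w \<noteq> 0 \<Longrightarrow> length w \<le> 4 \<and> set w \<subseteq> {1,2,3}"
proof -
  assume "ff w \<noteq> 0"
  then have "sq h1 w \<noteq> 0 \<or> sq h2 w \<noteq> 0" unfolding ff_def by auto
  then show ?thesis
  proof
    assume "sq h1 w \<noteq> 0"
    from sq_support[OF h1_small this] show ?thesis by simp
  next
    assume "sq h2 w \<noteq> 0"
    from sq_support[OF h2_small this] show ?thesis by simp
  qed
qed

lemma ff_poly: "nc_poly {1,2,3} ff"
  unfolding nc_poly_def
proof
  have "{w. ff w \<noteq> 0} \<subseteq> WW" using ff_small unfolding WW_def by auto
  then show "finite {w. ff w \<noteq> 0}" using WW_fin finite_subset by blast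
  show "\<forall>w. ff w \<noteq> 0 \<longrightarrow> set w \<subseteq> {1, 2, 3}" using ff_small by blast
qed

lemma sym1: "sq h1 (rev w) = sq h1 w" by (rule sq_sym[OF H1_fin]) (rule h1_supp)
lemma sym2: "sq h2 (rev w) = sq h2 w" by (rule sq_sym[OF H2_fin]) (rule h2_supp)

lemma ff_star: "nc_star ff = ff"
proof (rule ext)
  fix w
  have "nc_star ff w = ff (rev w)" by (simp only: nc_star_def)
  also have "\<dots> = ff w" by (simp only: ff_def sym1 sym2)
  finally show "nc_star ff w = ff w" .
qed

lemma ff_val: "(\<Sum>w\<in>WW. ff w * lam w) = -2"
proof -
  have HW1: "rev a @ b \<in> WW" if "a \<in> H1" "b \<in> H1" for a b
    using that unfolding H1_def WW_def by auto
  have HW2: "rev a @ b \<in> WW" if "a \<in> H2" "b \<in> H2" for a b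
    using that unfolding H2_def WW_def by auto
  have "(\<Sum>w\<in>WW. ff w * lam w) = (\<Sum>w\<in>WW. sq h1 w * lam w) + (\<Sum>w\<in>WW. sq h2 w * lam w)"
    unfolding ff_def by (simp add: distrib_right sum.distrib)
  also have "(\<Sum>w\<in>WW. sq h1 w * lam w) = (\<Sum>a\<in>H1. \<Sum>b\<in>H1. h1 a * h1 b * lam (rev a @ b))"
    by (rule Lam_sq[OF WW_fin H1_fin]) (auto intro: h1_supp HW1)
  also have "(\<Sum>w\<in>WW. sq h2 w * lam w) = (\<Sum>a\<in>H2. \<Sum>b\<in>H2. h2 a * h2 b * lam (rev a @ b))"
    by (rule Lam_sq[OF WW_fin H2_fin]) (auto intro: h2_supp HW2)
  finally show ?thesis using val1 val2 by simp
qed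

definition U12 :: "nat list set" where "U12 = {w. set w \<subseteq> {1,2} \<and> length w \<le> 2}"
definition U23 :: "nat list set" where "U23 = {w. set w \<subseteq> {2,3} \<and> length w \<le> 2}"

lemma U12_fin: "finite U12" unfolding U12_def by (rule finite_lists_length_le) simp
lemma U23_fin: "finite U23" unfolding U23_def by (rule finite_lists_length_le) simp

lemma Lam_nonneg12:
  assumes "\<forall>i<n. \<forall>a. hs i a \<noteq> 0 \<longrightarrow> a \<in> U12"
  shows "(\<Sum>w\<in>WW. (\<Sum>i<n. sq (hs i) w) * lam w) \<ge> 0"
proof -
  have "(\<Sum>w\<in>WW. (\<Sum>i<n. sq (hs i) w) * lam w) = (\<Sum>i<n. \<Sum>w\<in>WW. sq (hs i) w * lam w)"
    by (simp add: sum_distrib_right) (rule sum.swap)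
  also have "\<dots> = (\<Sum>i<n. \<Sum>a\<in>U12. \<Sum>b\<in>U12. hs i a * hs i b * lam (rev a @ b))"
  proof (rule sum.cong[OF refl])
    fix i assume "i \<in> {..<n}"
    then show "(\<Sum>w\<in>WW. sq (hs i) w * lam w) = (\<Sum>a\<in>U12. \<Sum>b\<in>U12. hs i a * hs i b * lam (rev a @ b))"
      using assms by (intro Lam_sq[OF WW_fin U12_fin]) (auto simp: U12_def WW_def)
  qed
  also have "\<dots> = (\<Sum>i<n. \<Sum>a\<in>U12. \<Sum>b\<in>U12. hs i a * hs i b * ip (psi 1 a) (psi 1 b))"
    by (intro sum.cong refl) (simp add: lam12 U12_def)
  also have "\<dots> \<ge> 0"
    by (rule sum_nonneg, unfold ip_def, rule quad_nonneg)
  finally show ?thesis .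
qed

lemma Lam_nonneg23:
  assumes "\<forall>i<n. \<forall>a. hs i a \<noteq> 0 \<longrightarrow> a \<in> U23"
  shows "(\<Sum>w\<in>WW. (\<Sum>i<n. sq (hs i) w) * lam w) \<ge> 0"
proof -
  have "(\<Sum>w\<in>WW. (\<Sum>i<n. sq (hs i) w) * lam w) = (\<Sum>i<n. \<Sum>w\<in>WW. sq (hs i) w * lam w)"
    by (simp add: sum_distrib_right) (rule sum.swap)
  also have "\<dots> = (\<Sum>i<n. \<Sum>a\<in>U23. \<Sum>b\<in>U23. hs i a * hs i b * lam (rev a @ b))"
  proof (rule sum.cong[OF refl])
    fix i assume "i \<in> {..<n}"
    then show "(\<Sum>w\<in>WW. sq (hs i) w * lam w) = (\<Sum>a\<in>U23. \<Sum>b\<in>U23. hs i a * hs i b * lam (rev a @ b))"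
      using assms by (intro Lam_sq[OF WW_fin U23_fin]) (auto simp: U23_def WW_def)
  qed
  also have "\<dots> = (\<Sum>i<n. \<Sum>a\<in>U23. \<Sum>b\<in>U23. hs i a * hs i b * ip (psi 0 a) (psi 0 b))"
    by (intro sum.cong refl) (simp add: lam23 U23_def)
  also have "\<dots> \<ge> 0"
    by (rule sum_nonneg, unfold ip_def, rule quad_nonneg)
  finally show ?thesis .
qed


lemma degree_bound:
  fixes hs1 hs2 :: "nat \<Rightarrow> ncpoly" and n1 n2 :: nat
  assumes p1: "\<forall>i<n1. nc_poly {1,2} (hs1 i)" and p2: "\<forall>i<n2. nc_poly {2,3} (hs2 i)"
    and eq: "\<And>w. ff w = (\<Sum>i<n1. sq (hs1 i) w) + (\<Sum>i<n2. sq (hs2 i) w)"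
  shows "(\<forall>i<n1. \<forall>a. hs1 i a \<noteq> 0 \<longrightarrow> length a \<le> 2) \<and> (\<forall>i<n2. \<forall>a. hs2 i a \<noteq> 0 \<longrightarrow> length a \<le> 2)"
proof (rule ccontr)
  define S where "S = (\<Union>i\<in>{..<n1}. {w. hs1 i w \<noteq> 0}) \<union> (\<Union>i\<in>{..<n2}. {w. hs2 i w \<noteq> 0})"
  have "finite (\<Union>i\<in>{..<n1}. {w. hs1 i w \<noteq> 0})"
    by (rule finite_UN_I) (use p1 in \<open>auto simp: nc_poly_def\<close>)
  moreover have "finite (\<Union>i\<in>{..<n2}. {w. hs2 i w \<noteq> 0})"
    by (rule finite_UN_I) (use p2 in \<open>auto simp: nc_poly_def\<close>)
  ultimately have finS: "finite S" unfolding S_def by blast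
  assume "\<not> ?thesis"
  then have "\<exists>u1. u1 \<in> S \<and> length u1 > 2" unfolding S_def by (auto simp: not_le)
  then obtain u1 where u1: "u1 \<in> S" "length u1 > 2" by blast
  define D where "D = Max (length ` S)"
  have "D \<in> length ` S" unfolding D_def using finS u1 by (intro Max_in) auto
  then obtain u where u: "u \<in> S" "length u = D" by auto
  have le: "length v \<le> D" if "v \<in> S" for v unfolding D_def using finS that by (intro Max_ge) auto
  have "D > 2" using le[OF u1(1)] u1(2) by simp
  have s1: "sq (hs1 i) (rev u @ u) = hs1 i u * hs1 i u" if "i < n1" for i
  proof (rule sq_top)
    fix a assume "hs1 i a \<noteq> 0"
    then have "a \<in> S" unfolding S_def using that by auto
    then show "length a \<le> length u" using le u by simp
  qed
  have s2: "sq (hs2 i) (rev u @ u) = hs2 i u * hs2 i u" if "i < n2" for i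
  proof (rule sq_top)
    fix a assume "hs2 i a \<noteq> 0"
    then have "a \<in> S" unfolding S_def using that by auto
    then show "length a \<le> length u" using le u by simp
  qed
  have "ff (rev u @ u) = 0"
  proof (rule ccontr)
    assume "ff (rev u @ u) \<noteq> 0"
    then have "length (rev u @ u) \<le> 4" using ff_small by blast
    then show False using \<open>D > 2\<close> u by simp
  qed
  then have "(\<Sum>i<n1. hs1 i u * hs1 i u) + (\<Sum>i<n2. hs2 i u * hs2 i u) = 0"
    using eq[of "rev u @ u"] s1 s2 by simp
  moreover have A: "(\<Sum>i<n1. hs1 i u * hs1 i u) \<ge> 0" "(\<Sum>i<n2. hs2 i u * hs2 i u) \<ge> 0"
    by (simp_all add: sum_nonneg)
  ultimately have "(\<Sum>i<n1. hs1 i u * hs1 i u) = 0" "(\<Sum>i<n2. hs2 i u * hs2 i u) = 0" by linarith+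
  then have "\<forall>i<n1. hs1 i u * hs1 i u = 0" "\<forall>i<n2. hs2 i u * hs2 i u = 0"
    by (simp_all add: sum_nonneg_eq_0_iff)
  then show False using u(1) unfolding S_def by auto
qed

theorem lemma6p2:
  shows "\<exists>f. nc_poly {1,2,3} f \<and> nc_star f = f
    \<and> (\<exists>g h. nc_poly {1,2} g \<and> nc_poly {2,3} h \<and> f = (\<lambda>w. g w + h w))
    \<and> SOHS {1,2,3} f
    \<and> \<not> (\<exists>g h. SOHS {1,2} g \<and> SOHS {2,3} h \<and> f = (\<lambda>w. g w + h w))"
proof (rule exI[of _ ff], intro conjI)
  show "nc_poly {1,2,3} ff" by (rule ff_poly)
  show "nc_star ff = ff" by (rule ff_star)
  have finff: "finite {w. ff w \<noteq> 0}" using ff_poly by (simp add: nc_poly_def)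
  define g0 where "g0 = (\<lambda>w. if set w \<subseteq> {1,2} then ff w else 0)"
  define h0 where "h0 = (\<lambda>w. if set w \<subseteq> {1,2} then 0 else ff w)"
  have G0: "nc_poly {1,2} g0" unfolding nc_poly_def g0_def
    by (auto intro: finite_subset[OF _ finff])
  have "set w \<subseteq> {2,3}" if "ff w \<noteq> 0" "\<not> set w \<subseteq> {1,2}" for w
  proof -
    have w3: "set w \<subseteq> {1,2,3}" using ff_small that(1) by blast
    have "\<not> (1 \<in> set w \<and> 3 \<in> set w)" using mixed that(1) unfolding ff_def by blast
    then show ?thesis using w3 that(2) by auto
  qed
  then have H0: "nc_poly {2,3} h0" unfolding nc_poly_def h0_def
    by (auto intro: finite_subset[OF _ finff])
  have E0: "ff = (\<lambda>w. g0 w + h0 w)" unfolding g0_def h0_def by auto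
  show "\<exists>g h. nc_poly {1,2} g \<and> nc_poly {2,3} h \<and> ff = (\<lambda>w. g w + h w)"
    using G0 H0 E0 by blast
  define hs0 where "hs0 = (\<lambda>i::nat. if i = 0 then h1 else h2)"
  have f1: "finite {w. h1 w \<noteq> 0}" by (rule finite_subset[OF _ H1_fin]) (auto intro: h1_supp)
  have f2: "finite {w. h2 w \<noteq> 0}" by (rule finite_subset[OF _ H2_fin]) (auto intro: h2_supp)
  have q1: "nc_poly {1,2,3} h1" unfolding nc_poly_def using f1 h1_small by blast
  have q2: "nc_poly {1,2,3} h2" unfolding nc_poly_def using f2 h2_small by blast
  have P0: "\<forall>i<2. nc_poly {1,2,3} (hs0 i)" unfolding hs0_def using q1 q2 by simp
  have S0: "ff = (\<lambda>w. \<Sum>i<2. nc_mult (nc_star (hs0 i)) (hs0 i) w)"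
    by (rule ext) (simp add: ff_def hs0_def numeral_2_eq_2)
  show "SOHS {1,2,3} ff"
    unfolding SOHS_def by (rule exI[of _ 2], rule exI[of _ hs0]) (use P0 S0 in blast)
  show "\<not> (\<exists>g h. SOHS {1,2} g \<and> SOHS {2,3} h \<and> ff = (\<lambda>w. g w + h w))"
  proof
    assume "\<exists>g h. SOHS {1,2} g \<and> SOHS {2,3} h \<and> ff = (\<lambda>w. g w + h w)"
    then obtain g h where gh: "SOHS {1,2} g" "SOHS {2,3} h" "ff = (\<lambda>w. g w + h w)" by blast
    obtain n1 :: nat and hs1 :: "nat \<Rightarrow> ncpoly" where g: "\<forall>i<n1. nc_poly {1,2} (hs1 i)" "g = (\<lambda>w. \<Sum>i<n1. sq (hs1 i) w)"
      using gh(1) unfolding SOHS_def by blast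
    obtain n2 :: nat and hs2 :: "nat \<Rightarrow> ncpoly" where h: "\<forall>i<n2. nc_poly {2,3} (hs2 i)" "h = (\<lambda>w. \<Sum>i<n2. sq (hs2 i) w)"
      using gh(2) unfolding SOHS_def by blast
    have eq: "ff w = (\<Sum>i<n1. sq (hs1 i) w) + (\<Sum>i<n2. sq (hs2 i) w)" for w
      using fun_cong[OF gh(3), of w] g(2) h(2) by simp
    note db = degree_bound[OF g(1) h(1) eq]
    have "\<forall>i<n1. \<forall>a. hs1 i a \<noteq> 0 \<longrightarrow> a \<in> U12"
      using db g(1) unfolding U12_def nc_poly_def by auto
    then have L1: "(\<Sum>w\<in>WW. (\<Sum>i<n1. sq (hs1 i) w) * lam w) \<ge> 0" by (rule Lam_nonneg12)
    have "\<forall>i<n2. \<forall>a. hs2 i a \<noteq> 0 \<longrightarrow> a \<in> U23"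
      using db h(1) unfolding U23_def nc_poly_def by auto
    then have L2: "(\<Sum>w\<in>WW. (\<Sum>i<n2. sq (hs2 i) w) * lam w) \<ge> 0" by (rule Lam_nonneg23)
    have "(\<Sum>w\<in>WW. ff w * lam w) = (\<Sum>w\<in>WW. (\<Sum>i<n1. sq (hs1 i) w) * lam w)
        + (\<Sum>w\<in>WW. (\<Sum>i<n2. sq (hs2 i) w) * lam w)"
      by (simp add: eq distrib_right sum.distrib)
    then show False using L1 L2 ff_val by linarith
  qed
qed

end
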